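(* Let $S$ be a subspace of $W_0$ of finite codimension, and let $i_0>0$ be an integer. Let $M_{i_0,S}$ be the Lie subalgebra of $W$ generated by $t^{i_0}D$, $t^{i_0+1}D$, $t^{i_0}D^2$ and $S$. Then there is an integer $K>0$ with $W_{[K,\infty)}\subset M_{i_0,S}$.
   Context: Let $\mathbb{F}$ be an algebraically closed field of characteristic zero, and let $W=\mathcal{W}(\mathbb{Z},1)^{(1)}=\mathrm{span}\{t^iD^j\mid i\in\mathbb{Z},\,j\ge1\}$. Its Lie bracket is $$[t^iDf(D),t^jDg(D)]=t^{i+j}D\big((D+j)f(D+j)g(D)-(D+i)g(D+i)f(D)\big)$$ for $f,g\in\mathbb{F}[D]$. The algebra is $\mathbb{Z}$-graded by $W_i=\{t^iDf(D)\mid f\in\mathbb{F}[D]\}$. We write $W_{[K,\infty)}=\bigoplus_{k\ge K}W_k$. *)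

theory Defs
  imports "HOL-Computational_Algebra.Polynomial"
begin

text \<open>An element of W = span{t^i D^j | j >= 1} is written uniquely as a finite sum
  of t^i D f_i(D) with f_i in F[D]; we represent it by the function i |-> f_i
  (an int-indexed family of polynomials in D with finite support).\<close>

definition Wset :: "(int \<Rightarrow> 'a::field poly) set" where
  "Wset = {x. finite {i. x i \<noteq> 0}}"

text \<open>[t^i D f(D), t^j D g(D)] = t^(i+j) D ((D+j) f(D+j) g(D) - (D+i) g(D+i) f(D)).\<close>
definition br_hom :: "int \<Rightarrow> 'a::field_char_0 poly \<Rightarrow> int \<Rightarrow> 'a poly \<Rightarrow> 'a poly" where
  "br_hom i f j g =
     [:of_int j, 1:] * pcompose f [:of_int j, 1:] * g
   - [:of_int i, 1:] * pcompose g [:of_int i, 1:] * f"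

definition Wbracket :: "(int \<Rightarrow> 'a::field_char_0 poly) \<Rightarrow> (int \<Rightarrow> 'a poly) \<Rightarrow> (int \<Rightarrow> 'a poly)" where
  "Wbracket x y = (\<lambda>k. \<Sum>i | x i \<noteq> 0. br_hom i (x i) (k - i) (y (k - i)))"

definition Whom :: "int \<Rightarrow> 'a::zero \<Rightarrow> (int \<Rightarrow> 'a)" where
  "Whom i f = (\<lambda>k. if k = i then f else 0)"

inductive_set Lie_gen :: "(int \<Rightarrow> 'a::field_char_0 poly) set \<Rightarrow> (int \<Rightarrow> 'a poly) set"
  for G where
  gen: "x \<in> G \<Longrightarrow> x \<in> Lie_gen G"
| zero: "(\<lambda>k. 0) \<in> Lie_gen G"
| add: "x \<in> Lie_gen G \<Longrightarrow> y \<in> Lie_gen G \<Longrightarrow> (\<lambda>k. x k + y k) \<in> Lie_gen G"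
| smul: "x \<in> Lie_gen G \<Longrightarrow> (\<lambda>k. smult c (x k)) \<in> Lie_gen G"
| brk: "x \<in> Lie_gen G \<Longrightarrow> y \<in> Lie_gen G \<Longrightarrow> Wbracket x y \<in> Lie_gen G"

text \<open>Subspaces of W_0 = {D f(D)}, identified with F[D] via D f(D) |-> f.\<close>
definition poly_subspace :: "'a::field poly set \<Rightarrow> bool" where
  "poly_subspace S \<longleftrightarrow> 0 \<in> S \<and> (\<forall>p\<in>S. \<forall>q\<in>S. p + q \<in> S) \<and> (\<forall>c. \<forall>p\<in>S. smult c p \<in> S)"

definition finite_codim :: "'a::field poly set \<Rightarrow> bool" where
  "finite_codim S \<longleftrightarrow> (\<exists>B. finite B \<and>
      (\<forall>p. \<exists>s\<in>S. \<exists>c. p = s + (\<Sum>b\<in>B. smult (c b) b)))"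

end

theory Submission
  imports Defs
begin

lemma coeffL_Suc: "coeff ([:c,1:] * (r::'a::comm_ring_1 poly)) (Suc j) = c * coeff r (Suc j) + coeff r j"
  by (simp add: mult_pCons_left)
lemma coeffL_0: "coeff ([:c,1:] * (r::'a::comm_ring_1 poly)) 0 = c * coeff r 0"
  by (simp add: mult_pCons_left)

lemma L1: fixes p :: "'a::field poly"
  assumes "degree p \<le> n" shows "coeff (p \<circ>\<^sub>p [:c,1:]) n = coeff p n"
proof (cases "degree p = n")
  case True
  have "degree (p \<circ>\<^sub>p [:c,1:]) = n" using True by (simp add: degree_pcompose)
  moreover have "lead_coeff (p \<circ>\<^sub>p [:c,1:]) = lead_coeff p" by (simp add: lead_coeff_comp)
  ultimately show ?thesis using True by simp
next
  case False
  then have "degree p < n" using assms by simp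
  moreover have "degree (p \<circ>\<^sub>p [:c,1:]) = degree p" by (simp add: degree_pcompose)
  ultimately show ?thesis by (simp add: coeff_eq_0)
qed

lemma L2: fixes p :: "'a::field poly"
  shows "degree p \<le> Suc m \<Longrightarrow> coeff (p \<circ>\<^sub>p [:c,1:]) m = coeff p m + of_nat (Suc m) * c * coeff p (Suc m)"
proof (induct p arbitrary: m rule: pCons_induct)
  case 0
  then show ?case by simp
next
  case (pCons a p)
  have dp: "degree p \<le> m" using pCons.prems
    by (cases "p = 0") auto
  have e: "(pCons a p) \<circ>\<^sub>p [:c,1:] = [:a:] + [:c,1:] * (p \<circ>\<^sub>p [:c,1:])"
    by (simp add: pcompose_pCons)
  show ?case
  proof (cases m)
    case 0
    have "coeff (p \<circ>\<^sub>p [:c,1:]) 0 = coeff p 0" using dp 0 L1 by blast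
    then show ?thesis using 0 by (simp add: e coeffL_0)
  next
    case (Suc m')
    have h1: "coeff (p \<circ>\<^sub>p [:c,1:]) (Suc m') = coeff p (Suc m')" using dp Suc L1 by blast
    have h2: "coeff (p \<circ>\<^sub>p [:c,1:]) m' = coeff p m' + of_nat (Suc m') * c * coeff p (Suc m')"
      using pCons.hyps(2)[of m'] dp Suc by simp
    show ?thesis unfolding e using Suc h1 h2 by (simp add: coeffL_Suc algebra_simps)
  qed
qed

lemma deg_drop: assumes "degree (r::'a::zero poly) \<le> Suc n" "coeff r (Suc n) = 0" shows "degree r \<le> n"
proof (rule degree_le, intro allI impI)
  fix i assume "n < i"
  then have "i = Suc n \<or> degree r < i" using assms(1) by linarith
  then show "coeff r i = 0" using assms(2) coeff_eq_0 by blast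
qed


lemma A_poly: fixes s :: "'a::field_char_0 poly" and k :: int
  assumes "degree s = Suc m" "s \<noteq> 0" "k \<noteq> 0"
  shows "degree (br_hom 0 s k 1) \<le> Suc m \<and> coeff (br_hom 0 s k 1) (Suc m) \<noteq> 0"
proof -
  let ?L = "[:of_int k, 1:] :: 'a poly"
  let ?r = "s \<circ>\<^sub>p ?L"
  have e: "br_hom 0 s k 1 = ?L * ?r - [:0,1:] * s"
    by (simp add: br_hom_def pcompose_1)
  have dr: "degree ?r = Suc m" using assms by (simp add: degree_pcompose)
  have d1: "degree (?L * ?r) \<le> Suc (Suc m)"
    using degree_mult_le[of ?L ?r] dr by simp
  have d2: "degree ([:0,1:] * s) \<le> Suc (Suc m)"
    using degree_mult_le[of "[:0,1:]" s] assms by simp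
  have c1: "coeff ?r (Suc (Suc m)) = 0" using dr by (simp add: coeff_eq_0)
  have c2: "coeff ?r (Suc m) = coeff s (Suc m)" using L1 assms by (metis order_refl)
  have c3: "coeff ?r m = coeff s m + of_nat (Suc m) * of_int k * coeff s (Suc m)"
    using L2 assms by (metis order_refl)
  have "coeff (br_hom 0 s k 1) (Suc (Suc m)) = 0"
    unfolding e by (simp add: coeffL_Suc c1 c2 mult_pCons_left)
  moreover have "degree (br_hom 0 s k 1) \<le> Suc (Suc m)"
    unfolding e using d1 d2 degree_diff_le by blast
  ultimately have "degree (br_hom 0 s k 1) \<le> Suc m" using deg_drop by blast
  moreover have "coeff (br_hom 0 s k 1) (Suc m) = of_nat (Suc (Suc m)) * of_int k * coeff s (Suc m)"
    unfolding e by (simp add: coeffL_Suc c2 c3 mult_pCons_left algebra_simps)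
  moreover have "coeff s (Suc m) \<noteq> 0" using assms by (metis leading_coeff_0_iff)
  moreover have "(of_nat (Suc (Suc m)) :: 'a) \<noteq> 0" by (metis of_nat_eq_0_iff nat.distinct(1))
  moreover have "(of_int k :: 'a) \<noteq> 0" using assms by simp
  ultimately show ?thesis by simp
qed

lemma B_poly: fixes g :: "'a::field_char_0 poly" and b i :: int
  assumes "degree g \<le> n"
  shows "degree (br_hom i [:0,1:] b g) \<le> Suc n \<and>
    coeff (br_hom i [:0,1:] b g) (Suc n) = (2 * of_int b - of_nat (Suc n) * of_int i) * coeff g n"
proof -
  let ?Lb = "[:of_int b, 1:] :: 'a poly"
  let ?Li = "[:of_int i, 1:] :: 'a poly"
  let ?r = "g \<circ>\<^sub>p ?Li"
  have p: "[:0,1:] \<circ>\<^sub>p ?Lb = ?Lb" by (simp add: pcompose_pCons)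
  have e: "br_hom i [:0,1:] b g = ?Lb * (?Lb * g) - [:0,1:] * (?Li * ?r)"
    unfolding br_hom_def p by (simp only: mult.assoc mult.commute mult.left_commute)
  have dr: "degree ?r \<le> n" using assms by (simp add: degree_pcompose)
  have d1: "degree (?Lb * (?Lb * g)) \<le> Suc (Suc n)"
    using degree_mult_le[of ?Lb "?Lb * g"] degree_mult_le[of ?Lb g] assms by simp
  have d2: "degree ([:0,1:] * (?Li * ?r)) \<le> Suc (Suc n)"
    using degree_mult_le[of "[:0,1:]" "?Li * ?r"] degree_mult_le[of ?Li ?r] dr by simp
  have g1: "coeff g (Suc n) = 0" "coeff g (Suc (Suc n)) = 0" using assms by (simp_all add: coeff_eq_0)
  have r1: "coeff ?r (Suc n) = 0" using dr by (simp add: coeff_eq_0)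
  have r2: "coeff ?r n = coeff g n" using L1 assms by blast
  have "coeff (br_hom i [:0,1:] b g) (Suc (Suc n)) = 0"
    unfolding e coeff_diff coeffL_Suc by (simp add: g1 r1 r2)
  moreover have "degree (br_hom i [:0,1:] b g) \<le> Suc (Suc n)"
    unfolding e using d1 d2 degree_diff_le by blast
  ultimately have "degree (br_hom i [:0,1:] b g) \<le> Suc n" using deg_drop by blast
  moreover have "coeff (br_hom i [:0,1:] b g) (Suc n) = (2 * of_int b - of_nat (Suc n) * of_int i) * coeff g n"
  proof (cases n)
    case 0
    have r0: "coeff ?r 0 = coeff g 0" using L1 assms 0 by blast
    show ?thesis unfolding e 0 coeff_diff coeffL_Suc coeffL_0 using 0 g1 r0
      by (simp add: algebra_simps)
  next
    case (Suc m)
    have r3: "coeff ?r m = coeff g m + of_nat (Suc m) * of_int i * coeff g (Suc m)"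
      using L2[of g m] assms Suc by simp
    show ?thesis unfolding e Suc coeff_diff coeffL_Suc coeffL_0 using Suc g1 r1 r2 r3
      by (simp add: algebra_simps)
  qed
  ultimately show ?thesis by blast
qed


lemma Wbracket_Whom: fixes f g :: "'a::field_char_0 poly"
  shows "Wbracket (Whom i f) (Whom j g) = Whom (i+j) (br_hom i f j g)"
proof (cases "f = 0")
  case True
  have "br_hom i f j g = 0" using True by (simp add: br_hom_def)
  moreover have "{i'. Whom i f i' \<noteq> 0} = {}" using True by (simp add: Whom_def)
  ultimately show ?thesis by (simp add: Wbracket_def Whom_def fun_eq_iff)
next
  case False
  have s: "{i'. Whom i f i' \<noteq> 0} = {i}" using False by (auto simp add: Whom_def)
  have z: "br_hom i f m 0 = 0" for m by (simp add: br_hom_def)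
  show ?thesis unfolding Wbracket_def s by (auto simp: fun_eq_iff Whom_def z)
qed

lemma Whom_zero_mem: "Whom k (0::'a::field_char_0 poly) \<in> Lie_gen G"
proof -
  have "Whom k (0::'a poly) = (\<lambda>k. 0)" by (simp add: Whom_def fun_eq_iff)
  then show ?thesis using Lie_gen.zero by metis
qed

lemma Whom_add_mem: fixes p q :: "'a::field_char_0 poly"
  shows "Whom k p \<in> Lie_gen G \<Longrightarrow> Whom k q \<in> Lie_gen G \<Longrightarrow> Whom k (p+q) \<in> Lie_gen G"
proof -
  assume "Whom k p \<in> Lie_gen G" "Whom k q \<in> Lie_gen G"
  moreover have "(\<lambda>k'. Whom k p k' + Whom k q k') = Whom k (p+q)" by (auto simp: Whom_def fun_eq_iff)
  ultimately show ?thesis by (metis Lie_gen.add)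
qed

lemma Whom_smult_mem: fixes p :: "'a::field_char_0 poly"
  shows "Whom k p \<in> Lie_gen G \<Longrightarrow> Whom k (smult c p) \<in> Lie_gen G"
proof -
  assume "Whom k p \<in> Lie_gen G"
  moreover have "(\<lambda>k'. smult c (Whom k p k')) = Whom k (smult c p)" by (auto simp: Whom_def fun_eq_iff)
  ultimately show ?thesis by (metis Lie_gen.smul)
qed

lemma Whom_brk_mem: fixes f g :: "'a::field_char_0 poly"
  shows "Whom i f \<in> Lie_gen G \<Longrightarrow> Whom j g \<in> Lie_gen G \<Longrightarrow> Whom (i+j) (br_hom i f j g) \<in> Lie_gen G"
  by (metis Lie_gen.brk Wbracket_Whom)

lemma span_all: fixes G :: "(int \<Rightarrow> 'a::field_char_0 poly) set"
  assumes "\<forall>n. \<exists>q. degree q \<le> n \<and> coeff q n \<noteq> 0 \<and> Whom k q \<in> Lie_gen G"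
  shows "Whom k p \<in> Lie_gen G"
proof (induct "degree p" arbitrary: p rule: less_induct)
  case less
  obtain q where q: "degree q \<le> degree p" "coeff q (degree p) \<noteq> 0" "Whom k q \<in> Lie_gen G"
    using assms by blast
  define c where "c = coeff p (degree p) / coeff q (degree p)"
  define p' where "p' = p - smult c q"
  have cp': "coeff p' (degree p) = 0" using q(2) by (simp add: p'_def c_def)
  have dp': "degree p' \<le> degree p" unfolding p'_def using q(1)
    by (intro degree_diff_le) (auto intro: le_trans[OF degree_smult_le])
  have "Whom k p' \<in> Lie_gen G"
  proof (cases "p' = 0")
    case True then show ?thesis by (simp add: Whom_zero_mem)
  next
    case False
    then have "degree p' \<noteq> degree p" using cp' by (metis leading_coeff_0_iff)
    then have "degree p' < degree p" using dp' by simp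
    then show ?thesis using less by blast
  qed
  moreover have "p = p' + smult c q" by (simp add: p'_def)
  ultimately show ?case using q(3) Whom_add_mem Whom_smult_mem by metis
qed

lemma witt_step: fixes G :: "(int \<Rightarrow> 'a::field_char_0 poly) set"
  assumes "Whom i (1::'a poly) \<in> Lie_gen G" "Whom j (1::'a poly) \<in> Lie_gen G" "i \<noteq> j"
  shows "Whom (i+j) (1::'a poly) \<in> Lie_gen G"
proof -
  have "br_hom i (1::'a poly) j 1 = [:of_int (j - i):]" by (simp add: br_hom_def pcompose_1)
  then have "Whom (i+j) [:of_int (j - i)::'a:] \<in> Lie_gen G" using Whom_brk_mem assms(1,2) by metis
  then have "Whom (i+j) (smult (1 / of_int (j - i)) [:of_int (j - i)::'a:]) \<in> Lie_gen G"
    by (rule Whom_smult_mem)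
  moreover have "smult (1 / of_int (j - i)) [:of_int (j - i)::'a:] = 1" using assms(3)
    by (simp add: one_pCons)
  ultimately show ?thesis by simp
qed

lemma witt_range: fixes G :: "(int \<Rightarrow> 'a::field_char_0 poly) set" and a :: int
  assumes a: "a > 0" and e1: "Whom a (1::'a poly) \<in> Lie_gen G" and e2: "Whom (a+1) (1::'a poly) \<in> Lie_gen G"
  shows "\<forall>n \<ge> 2*a+1+a*a. Whom n (1::'a poly) \<in> Lie_gen G"
proof -
  have b: "Whom (2*a+1) (1::'a poly) \<in> Lie_gen G"
    using witt_step[OF e1 e2] by (simp add: algebra_simps)
  have s1: "Whom (2*a+1 + int q*(a+1)) (1::'a poly) \<in> Lie_gen G" for q
  proof (induct q)
    case 0 then show ?case using b by simp
  next
    case (Suc q)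
    have "2*a+1 + int q*(a+1) \<noteq> a+1" using a by (smt (verit) mult_nonneg_nonneg of_nat_0_le_iff)
    then have "Whom ((2*a+1 + int q*(a+1)) + (a+1)) (1::'a poly) \<in> Lie_gen G"
      using witt_step[OF Suc e2] by blast
    then show ?case by (simp add: algebra_simps)
  qed
  have s2: "Whom (2*a+1 + int q*(a+1) + int p*a) (1::'a poly) \<in> Lie_gen G" for p q
  proof (induct p)
    case 0 then show ?case using s1 by simp
  next
    case (Suc p)
    have "2*a+1 + int q*(a+1) + int p * a \<noteq> a" using a
      by (smt (verit) mult_nonneg_nonneg of_nat_0_le_iff)
    then have "Whom ((2*a+1 + int q*(a+1) + int p*a) + a) (1::'a poly) \<in> Lie_gen G"
      using witt_step[OF Suc e1] by blast
    then show ?case by (simp add: algebra_simps)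
  qed
  show ?thesis
  proof (intro allI impI)
    fix n assume n: "2*a+1+a*a \<le> n"
    define d where "d = n - (2*a+1)"
    define u where "u = d div a"
    define r where "r = d mod a"
    have dd: "d = a*u + r" unfolding u_def r_def by simp
    have r0: "0 \<le> r" "r < a" unfolding r_def using a by simp_all
    have "a*a \<le> d" using n d_def by simp
    then have "(a*a) div a \<le> u" unfolding u_def using a zdiv_mono1[of "a*a" d a] by linarith
    then have ua: "a \<le> u" using a by simp
    have eq: "n = 2*a+1 + int (nat r)*(a+1) + int (nat (u - r))*a"
      using dd r0 ua d_def by (simp add: algebra_simps)
    show "Whom n (1::'a poly) \<in> Lie_gen G" using s2[of "nat r" "nat (u - r)"] eq by simp
  qed
qed

lemma supp_sum: fixes G :: "(int \<Rightarrow> 'a::field_char_0 poly) set"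
  assumes "finite {i. x i \<noteq> 0}" "\<forall>i. x i \<noteq> 0 \<longrightarrow> Whom i (x i) \<in> Lie_gen G"
  shows "x \<in> Lie_gen G"
proof -
  have "\<forall>x. {i. x i \<noteq> 0} = F \<longrightarrow> (\<forall>i. x i \<noteq> 0 \<longrightarrow> Whom i (x i) \<in> Lie_gen G) \<longrightarrow> x \<in> Lie_gen G"
    if "finite F" for F
    using that
  proof (induct F rule: finite_induct)
    case empty
    show ?case
    proof (intro allI impI)
      fix x :: "int \<Rightarrow> 'a poly" assume "{i. x i \<noteq> 0} = {}"
      then have "x = (\<lambda>k. 0)" by (auto simp: fun_eq_iff)
      then show "x \<in> Lie_gen G" using Lie_gen.zero by metis
    qed
  next
    case (insert j F)
    show ?case
    proof (intro allI impI)
      fix x :: "int \<Rightarrow> 'a poly"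
      assume h1: "{i. x i \<noteq> 0} = insert j F" and h2: "\<forall>i. x i \<noteq> 0 \<longrightarrow> Whom i (x i) \<in> Lie_gen G"
      define x' where "x' = x(j := 0)"
      have "{i. x' i \<noteq> 0} = F" using h1 insert(2) unfolding x'_def by auto
      moreover have "\<forall>i. x' i \<noteq> 0 \<longrightarrow> Whom i (x' i) \<in> Lie_gen G" using h2 unfolding x'_def by auto
      ultimately have x': "x' \<in> Lie_gen G" using insert(3) by blast
      have xj: "Whom j (x j) \<in> Lie_gen G" using h1 h2 by auto
      have "x = (\<lambda>k. x' k + Whom j (x j) k)" by (auto simp: fun_eq_iff x'_def Whom_def)
      then show "x \<in> Lie_gen G" using Lie_gen.add[OF x' xj] by metis
    qed
  qed
  then show ?thesis using assms by blast
qed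


theorem lemma2p1:
  fixes S :: "'a::{alg_closed_field, field_char_0} poly set" and i0 :: int
  assumes "poly_subspace S" and "finite_codim S" and "i0 > 0"
  shows "\<exists>K::int. K > 0 \<and>
    (\<forall>x\<in>Wset. (\<forall>k<K. x k = 0) \<longrightarrow>
       x \<in> Lie_gen ({Whom i0 1, Whom (i0 + 1) 1, Whom i0 [:0, 1:]} \<union> Whom 0 ` S))"
proof -
  define G where "G = ({Whom i0 1, Whom (i0 + 1) 1, Whom i0 [:0, 1:]} \<union> Whom 0 ` S :: (int \<Rightarrow> 'a poly) set)"
  let ?L = "Lie_gen G"
  have a: "i0 > 0" using assms(3) .
  obtain B where B: "finite B" "\<forall>p. \<exists>s\<in>S. \<exists>c. p = s + (\<Sum>b\<in>B. smult (c b) b)"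
    using assms(2) unfolding finite_codim_def by blast
  define N where "N = Max (insert 0 (degree ` B))"
  have degB: "degree b \<le> N" if "b \<in> B" for b
    unfolding N_def using B(1) that by simp
  have Sdeg: "\<exists>s\<in>S. degree s = n" if "n > N" for n
  proof -
    obtain s c where s: "s \<in> S" "monom 1 n = s + (\<Sum>b\<in>B. smult (c b) b)"
      using B(2) by blast
    define t where "t = (\<Sum>b\<in>B. smult (c b) b)"
    have dt: "degree t \<le> N" unfolding t_def
      using B(1) by (intro degree_sum_le) (auto intro: le_trans[OF degree_smult_le] degB)
    have se: "s = monom 1 n - t" using s(2) t_def by simp
    have "coeff t n = 0" using dt that by (simp add: coeff_eq_0)
    then have c1: "coeff s n = 1" using se by simp
    have "degree s \<le> n" unfolding se using dt that
      by (intro degree_diff_le) (auto simp: degree_monom_le)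
    moreover have "n \<le> degree s" using c1 by (simp add: le_degree)
    ultimately show ?thesis using s(1) by auto
  qed
  have g1: "Whom i0 (1::'a poly) \<in> ?L" unfolding G_def by (simp add: Lie_gen.gen)
  have g2: "Whom (i0+1) (1::'a poly) \<in> ?L" unfolding G_def by (simp add: Lie_gen.gen)
  have g3: "Whom i0 [:0,1::'a:] \<in> ?L" unfolding G_def by (simp add: Lie_gen.gen)
  have g4: "Whom 0 s \<in> ?L" if "s \<in> S" for s unfolding G_def using that by (simp add: Lie_gen.gen)
  define K0 where "K0 = 2*i0+1+i0*i0"
  have K0pos: "K0 > 0" unfolding K0_def using a by (simp add: add_pos_nonneg)
  have e: "Whom k (1::'a poly) \<in> ?L" if "k \<ge> K0" for k
    using witt_range[OF a g1 g2] that unfolding K0_def by blast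
  have Q: "\<forall>k \<ge> K0 + int n * i0. \<exists>q. degree q \<le> n \<and> coeff q n \<noteq> 0 \<and> Whom k q \<in> ?L" for n
  proof (induct n)
    case 0
    show ?case
    proof (intro allI impI)
      fix k assume "K0 + int 0 * i0 \<le> k"
      then have "Whom k (1::'a poly) \<in> ?L" using e by simp
      then show "\<exists>q. degree q \<le> 0 \<and> coeff q 0 \<noteq> 0 \<and> Whom k q \<in> ?L" by (intro exI[of _ 1]) simp
    qed
  next
    case (Suc n)
    show ?case
    proof (intro allI impI)
      fix k assume k: "K0 + int (Suc n) * i0 \<le> k"
      define b where "b = k - i0"
      have bb: "K0 + int n * i0 \<le> b" using k unfolding b_def by (simp add: algebra_simps)
      obtain q where q: "degree q \<le> n" "coeff q n \<noteq> 0" "Whom b q \<in> ?L" using Suc bb by blast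
      have m: "Whom (i0 + b) (br_hom i0 [:0,1:] b q) \<in> ?L" using Whom_brk_mem[OF g3 q(3)] .
      have bp: "degree (br_hom i0 [:0,1:] b q) \<le> Suc n \<and>
        coeff (br_hom i0 [:0,1:] b q) (Suc n) = (2 * of_int b - of_nat (Suc n) * of_int i0) * coeff q n"
        using B_poly[OF q(1)] .
      have pos: "2 * b - int (Suc n) * i0 > 0"
      proof -
        have "int n * i0 \<ge> 0" using a by simp
        then have "2 * b \<ge> 2 * K0 + 2 * (int n * i0)" using bb by simp
        moreover have "2 * K0 > i0" unfolding K0_def using a by (simp add: add_pos_nonneg)
        moreover have "i0 * int n \<ge> 0" using a by simp
        ultimately show ?thesis by (simp add: algebra_simps)
      qed
      have "(2 * of_int b - of_nat (Suc n) * of_int i0 :: 'a) = of_int (2 * b - int (Suc n) * i0)"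
        by simp
      moreover have "(of_int (2 * b - int (Suc n) * i0) :: 'a) \<noteq> 0" using pos
        by (metis of_int_eq_0_iff less_irrefl)
      ultimately have "coeff (br_hom i0 [:0,1:] b q) (Suc n) \<noteq> 0" using bp q(2) by simp
      moreover have "i0 + b = k" unfolding b_def by simp
      ultimately show "\<exists>q. degree q \<le> Suc n \<and> coeff q (Suc n) \<noteq> 0 \<and> Whom k q \<in> ?L"
        using bp m by metis
    qed
  qed
  have High: "\<exists>q. degree q \<le> n \<and> coeff q n \<noteq> 0 \<and> Whom k q \<in> ?L" if hk: "k \<ge> K0" and hn: "n > N" for k n
  proof -
    obtain s where s: "s \<in> S" "degree s = n" using Sdeg[OF hn] by blast
    obtain m where nm: "n = Suc m" using hn by (cases n) auto
    have s0: "s \<noteq> 0" using s(2) nm by auto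
    have k0: "k \<noteq> 0" using hk K0pos by simp
    have ap: "degree (br_hom 0 s k 1) \<le> Suc m \<and> coeff (br_hom 0 s k 1) (Suc m) \<noteq> 0"
      using A_poly[OF _ s0 k0] s(2) nm by simp
    have "Whom (0 + k) (br_hom 0 s k 1) \<in> ?L" using Whom_brk_mem[OF g4[OF s(1)] e[OF hk]] .
    then show ?thesis using ap nm by auto
  qed
  define K where "K = K0 + int (Suc N) * i0"
  have Kpos: "K > 0" unfolding K_def using K0pos a by (simp add: add_pos_nonneg)
  have allk: "Whom k p \<in> ?L" if "k \<ge> K" for k p
  proof (rule span_all, intro allI)
    fix n
    show "\<exists>q. degree q \<le> n \<and> coeff q n \<noteq> 0 \<and> Whom k q \<in> ?L"
    proof (cases "n \<le> N")
      case True
      have "int n * i0 \<le> int (Suc N) * i0" using True a by (intro mult_right_mono) auto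
      then have "K0 + int n * i0 \<le> k" using that unfolding K_def by linarith
      then show ?thesis using Q by blast
    next
      case False
      have "int (Suc N) * i0 \<ge> 0" using a by simp
      then have "k \<ge> K0" using that unfolding K_def by linarith
      then show ?thesis using High False by simp
    qed
  qed
  show ?thesis
  proof (intro exI[of _ K] conjI ballI impI)
    show "K > 0" by (rule Kpos)
    fix x :: "int \<Rightarrow> 'a poly" assume x: "x \<in> Wset" and xk: "\<forall>k<K. x k = 0"
    have "x \<in> ?L"
    proof (rule supp_sum)
      show "finite {i. x i \<noteq> 0}" using x unfolding Wset_def by simp
      show "\<forall>i. x i \<noteq> 0 \<longrightarrow> Whom i (x i) \<in> ?L"
      proof (intro allI impI)
        fix i assume "x i \<noteq> 0"
        then have "i \<ge> K" using xk by (meson not_less)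
        then show "Whom i (x i) \<in> ?L" by (rule allk)
      qed
    qed
    then show "x \<in> Lie_gen ({Whom i0 1, Whom (i0 + 1) 1, Whom i0 [:0, 1:]} \<union> Whom 0 ` S)"
      unfolding G_def .
  qed
qed

end
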